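(* Let $X$ be a topological space and let $A\subseteq X$ be an open subset whose closure $\overline{A}$ in $X$ is path connected. Let $p:X\to X/A$ be the quotient map and $*=p(A)$. Then for every $a\in A$, the image of the induced continuous homomorphism $p_*:\pi_1^{top}(X,a)\to \pi_1^{top}(X/A,* )$ is dense, i.e. $\overline{p_*\pi_1^{top}(X,a)}=\pi_1^{top}(X/A,* )$.
   Context: For $A\subseteq X$, $X/A$ denotes the quotient space obtained from $X$ by identifying all points of $A$ to a single point $*$, with quotient map $p$. For a pointed space $(X,x)$, $\Omega(X,x)$ is the space of loops $[0,1]\to X$ based at $x$ with the compact-open topology, and the topological fundamental group $\pi_1^{top}(X,x)$ is the fundamental group $\pi_1(X,x)$ equipped with the quotient topology with respect to the canonical surjection $\Omega(X,x)\to\pi_1(X,x)$ sending a loop to its homotopy class (rel endpoints). A based continuous map $f$ induces a continuous homomorphism $f_*$ of topological fundamental groups. *)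

theory Defs
  imports "HOL-Analysis.Analysis"
begin

definition quotient_topology :: "'a topology \<Rightarrow> ('a \<Rightarrow> 'b) \<Rightarrow> 'b topology" where
  "quotient_topology T f =
     topology (\<lambda>U. U \<subseteq> f ` topspace T \<and> openin T {y \<in> topspace T. f y \<in> U})"

lemma istopology_quotient:
  "istopology (\<lambda>U. U \<subseteq> f ` topspace T \<and> openin T {y \<in> topspace T. f y \<in> U})"
proof -
  have i: "{y \<in> topspace T. f y \<in> S \<inter> U} = {y \<in> topspace T. f y \<in> S} \<inter> {y \<in> topspace T. f y \<in> U}" for S U
    by auto
  have u: "{y \<in> topspace T. f y \<in> \<Union>K} = (\<Union>U\<in>K. {y \<in> topspace T. f y \<in> U})" for K
    by auto
  show ?thesis unfolding istopology_def
  proof (rule conjI; intro allI impI ballI)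
    fix S U assume "S \<subseteq> f ` topspace T \<and> openin T {y \<in> topspace T. f y \<in> S}"
      "U \<subseteq> f ` topspace T \<and> openin T {y \<in> topspace T. f y \<in> U}"
    then show "S \<inter> U \<subseteq> f ` topspace T \<and> openin T {y \<in> topspace T. f y \<in> S \<inter> U}"
      unfolding i using openin_Int by blast
  next
    fix K assume "\<forall>U\<in>K. U \<subseteq> f ` topspace T \<and> openin T {y \<in> topspace T. f y \<in> U}"
    then show "\<Union>K \<subseteq> f ` topspace T \<and> openin T {y \<in> topspace T. f y \<in> \<Union>K}"
      unfolding u by (intro conjI openin_Union) auto
  qed
qed

lemma openin_quotient_topology:
  "openin (quotient_topology T f) U \<longleftrightarrow> U \<subseteq> f ` topspace T \<and> openin T {y \<in> topspace T. f y \<in> U}"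
  unfolding quotient_topology_def by (simp add: topology_inverse'[OF istopology_quotient])

definition collapse :: "'a set \<Rightarrow> 'a \<Rightarrow> 'a set" where
  "collapse A x = (if x \<in> A then A else {x})"

definition quotient_space :: "'a topology \<Rightarrow> 'a set \<Rightarrow> 'a set topology" where
  "quotient_space X A = quotient_topology X (collapse A)"

definition loops :: "'a topology \<Rightarrow> 'a \<Rightarrow> (real \<Rightarrow> 'a) set" where
  "loops X x = {g. pathin X g \<and> g 0 = x \<and> g 1 = x}"

definition loop_space :: "'a topology \<Rightarrow> 'a \<Rightarrow> (real \<Rightarrow> 'a) topology" where
  "loop_space X x = topology_generated_by
     {{g \<in> loops X x. g ` K \<subseteq> U} | K U. compactin (top_of_set {0..1::real}) K \<and> openin X U}"

text \<open>Homotopy of based loops relative to the endpoints (only values on [0,1] matter).\<close>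
definition loop_homotopic :: "'a topology \<Rightarrow> 'a \<Rightarrow> (real \<Rightarrow> 'a) \<Rightarrow> (real \<Rightarrow> 'a) \<Rightarrow> bool" where
  "loop_homotopic X x g g' \<longleftrightarrow>
     (\<exists>h. continuous_map (prod_topology (top_of_set {0..1::real}) (top_of_set {0..1::real})) X h \<and>
          (\<forall>s\<in>{0..1}. h (0, s) = g s \<and> h (1, s) = g' s) \<and>
          (\<forall>t\<in>{0..1}. h (t, 0) = x \<and> h (t, 1) = x))"

definition loop_class :: "'a topology \<Rightarrow> 'a \<Rightarrow> (real \<Rightarrow> 'a) \<Rightarrow> (real \<Rightarrow> 'a) set" where
  "loop_class X x g = {g' \<in> loops X x. loop_homotopic X x g g'}"

text \<open>Topological fundamental group (underlying topological space; elements are homotopy classes).\<close>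
definition pi1_top :: "'a topology \<Rightarrow> 'a \<Rightarrow> (real \<Rightarrow> 'a) set topology" where
  "pi1_top X x = quotient_topology (loop_space X x) (loop_class X x)"

definition induced_pi1 :: "'a topology \<Rightarrow> 'a \<Rightarrow> 'b topology \<Rightarrow> ('a \<Rightarrow> 'b)
                          \<Rightarrow> (real \<Rightarrow> 'a) set \<Rightarrow> (real \<Rightarrow> 'b) set" where
  "induced_pi1 X x Y f c = loop_class Y (f x) (f \<circ> (SOME g. g \<in> c))"

end

theory Submission
  imports Defs
begin

lemma topspace_quotient_topology: "topspace (quotient_topology T f) = f ` topspace T"
proof -
  have "{y \<in> topspace T. f y \<in> f ` topspace T} = topspace T" by auto
  then have 1: "openin (quotient_topology T f) (f ` topspace T)"
    unfolding openin_quotient_topology by auto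
  have 2: "topspace (quotient_topology T f) \<subseteq> f ` topspace T"
    using openin_topspace[of "quotient_topology T f"] unfolding openin_quotient_topology by blast
  show ?thesis using openin_subset[OF 1] 2 by (rule subset_antisym[rotated])
qed

lemma continuous_map_quotient: "continuous_map T (quotient_topology T f) f"
  unfolding continuous_map_def topspace_quotient_topology openin_quotient_topology
  by auto

lemma prod_top_of_set: "prod_topology (top_of_set S) (top_of_set T) = top_of_set (S \<times> T)"
  by (metis prod_topology_euclidean subtopology_Times)

lemma continuous_map_comp_real:
  assumes "continuous_on D \<phi>" "\<phi> ` D \<subseteq> D'" "continuous_map (top_of_set D') X h"
  shows "continuous_map (top_of_set D) X (\<lambda>x. h (\<phi> x))"
proof -
  have "continuous_map (top_of_set D) (top_of_set D') \<phi>"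
    using assms(1,2) by (auto simp: continuous_map_in_subtopology)
  from continuous_map_compose[OF this assms(3)] show ?thesis by (simp add: o_def)
qed

section \<open>Loop space\<close>

lemma topspace_loop_space: "topspace (loop_space X x) = loops X x"
proof -
  have "loops X x \<in> {{g \<in> loops X x. g ` K \<subseteq> U} | K U. compactin (top_of_set {0..1::real}) K \<and> openin X U}"
    by (rule CollectI, rule exI[of _ "{}"], rule exI[of _ "topspace X"]) auto
  then show ?thesis unfolding loop_space_def topology_generated_by_topspace by blast
qed

lemma loop_space_nbhd_aux:
  assumes "generate_topology_on {{g \<in> loops X x. g ` K \<subseteq> U} | K U. compactin (top_of_set {0..1::real}) K \<and> openin X U} V"
  shows "\<beta> \<in> V \<Longrightarrow> \<exists>P. finite P \<and> (\<forall>z\<in>P. compactin (top_of_set {0..1::real}) (fst z) \<and> openin X (snd z) \<and> \<beta> ` (fst z) \<subseteq> snd z)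
      \<and> (\<forall>g\<in>loops X x. (\<forall>z\<in>P. g ` (fst z) \<subseteq> snd z) \<longrightarrow> g \<in> V)"
  using assms
proof (induction arbitrary: \<beta> rule: generate_topology_on.induct)
  case Empty
  then show ?case by (meson empty_iff)
next
  case (Int a b)
  obtain P1 where P1: "finite P1" "\<forall>z\<in>P1. compactin (top_of_set {0..1::real}) (fst z) \<and> openin X (snd z) \<and> \<beta> ` (fst z) \<subseteq> snd z"
    "\<forall>g\<in>loops X x. (\<forall>z\<in>P1. g ` (fst z) \<subseteq> snd z) \<longrightarrow> g \<in> a"
    using Int.IH(1)[of \<beta>] Int.prems by (meson IntD1)
  obtain P2 where P2: "finite P2" "\<forall>z\<in>P2. compactin (top_of_set {0..1::real}) (fst z) \<and> openin X (snd z) \<and> \<beta> ` (fst z) \<subseteq> snd z"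
    "\<forall>g\<in>loops X x. (\<forall>z\<in>P2. g ` (fst z) \<subseteq> snd z) \<longrightarrow> g \<in> b"
    using Int.IH(2)[of \<beta>] Int.prems by (meson IntD2)
  have "finite (P1 \<union> P2)" using P1(1) P2(1) by simp
  moreover have "\<forall>z\<in>P1 \<union> P2. compactin (top_of_set {0..1::real}) (fst z) \<and> openin X (snd z) \<and> \<beta> ` (fst z) \<subseteq> snd z"
    using P1(2) P2(2) by auto
  moreover have "\<forall>g\<in>loops X x. (\<forall>z\<in>P1 \<union> P2. g ` (fst z) \<subseteq> snd z) \<longrightarrow> g \<in> a \<inter> b"
    using P1(3) P2(3) by auto
  ultimately show ?case by (intro exI[of _ "P1 \<union> P2"]) simp
next
  case (UN K)
  then obtain k where k: "k \<in> K" "\<beta> \<in> k" by (meson UnionE)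
  obtain P where P: "finite P" "\<forall>z\<in>P. compactin (top_of_set {0..1::real}) (fst z) \<and> openin X (snd z) \<and> \<beta> ` (fst z) \<subseteq> snd z"
    "\<forall>g\<in>loops X x. (\<forall>z\<in>P. g ` (fst z) \<subseteq> snd z) \<longrightarrow> g \<in> k" using UN.IH[OF k] by meson
  have "\<forall>g\<in>loops X x. (\<forall>z\<in>P. g ` (fst z) \<subseteq> snd z) \<longrightarrow> g \<in> \<Union>K"
    using P(3) k(1) by blast
  with P(1,2) show ?case by (intro exI[of _ P]) simp
next
  case (Basis s)
  then obtain K U where s: "s = {g \<in> loops X x. g ` K \<subseteq> U}" "compactin (top_of_set {0..1::real}) K" "openin X U"
    by blast
  have "\<forall>g\<in>loops X x. (\<forall>z\<in>{(K,U)}. g ` (fst z) \<subseteq> snd z) \<longrightarrow> g \<in> s"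
    using s(1) by simp
  moreover have "\<forall>z\<in>{(K,U)}. compactin (top_of_set {0..1::real}) (fst z) \<and> openin X (snd z) \<and> \<beta> ` (fst z) \<subseteq> snd z"
    using s Basis.prems by auto
  ultimately show ?case by (intro exI[of _ "{(K,U)}"]) simp
qed

lemma loop_space_nbhd:
  assumes "openin (loop_space X x) V" "\<beta> \<in> V"
  shows "\<exists>P. finite P \<and> (\<forall>z\<in>P. compactin (top_of_set {0..1::real}) (fst z) \<and> openin X (snd z) \<and> \<beta> ` (fst z) \<subseteq> snd z)
      \<and> (\<forall>g\<in>loops X x. (\<forall>z\<in>P. g ` (fst z) \<subseteq> snd z) \<longrightarrow> g \<in> V)"
proof -
  have "generate_topology_on {{g \<in> loops X x. g ` K \<subseteq> U} | K U. compactin (top_of_set {0..1::real}) K \<and> openin X U} V"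
    using assms(1) unfolding loop_space_def openin_topology_generated_by_iff .
  from loop_space_nbhd_aux[OF this assms(2)] show ?thesis .
qed

section \<open>Homotopies of loops\<close>

lemma loops_pathin: "g \<in> loops X x \<Longrightarrow> continuous_map (top_of_set {0..1}) X g"
  by (simp add: loops_def pathin_def)

lemma loop_homotopic_refl:
  assumes "g \<in> loops X x" shows "loop_homotopic X x g g"
proof -
  have c: "continuous_map (top_of_set ({0..1::real} \<times> {0..1::real})) X (\<lambda>z. g (snd z))"
    by (rule continuous_map_comp_real[OF _ _ loops_pathin[OF assms]]) (auto intro!: continuous_intros)
  show ?thesis unfolding loop_homotopic_def prod_top_of_set
    by (rule exI[of _ "\<lambda>z. g (snd z)"]) (use c assms in \<open>auto simp: loops_def\<close>)
qed

lemma loop_homotopic_sym: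
  assumes "loop_homotopic X x g g'" shows "loop_homotopic X x g' g"
proof -
  obtain h where h: "continuous_map (top_of_set ({0..1::real} \<times> {0..1::real})) X h"
    "\<forall>s\<in>{0..1}. h (0, s) = g s \<and> h (1, s) = g' s" "\<forall>t\<in>{0..1}. h (t, 0) = x \<and> h (t, 1) = x"
    using assms unfolding loop_homotopic_def prod_top_of_set by blast
  have c: "continuous_map (top_of_set ({0..1::real} \<times> {0..1::real})) X (\<lambda>z. h (1 - fst z, snd z))"
    by (rule continuous_map_comp_real[OF _ _ h(1)]) (auto intro!: continuous_intros)
  show ?thesis unfolding loop_homotopic_def prod_top_of_set
    by (rule exI[of _ "\<lambda>z. h (1 - fst z, snd z)"]) (use c h in auto)
qed

lemma loop_homotopic_trans:
  assumes "loop_homotopic X x g g'" "loop_homotopic X x g' g''" shows "loop_homotopic X x g g''"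
proof -
  obtain h1 where h1: "continuous_map (top_of_set ({0..1::real} \<times> {0..1::real})) X h1"
    "\<forall>s\<in>{0..1}. h1 (0, s) = g s \<and> h1 (1, s) = g' s" "\<forall>t\<in>{0..1}. h1 (t, 0) = x \<and> h1 (t, 1) = x"
    using assms(1) unfolding loop_homotopic_def prod_top_of_set by blast
  obtain h2 where h2: "continuous_map (top_of_set ({0..1::real} \<times> {0..1::real})) X h2"
    "\<forall>s\<in>{0..1}. h2 (0, s) = g' s \<and> h2 (1, s) = g'' s" "\<forall>t\<in>{0..1}. h2 (t, 0) = x \<and> h2 (t, 1) = x"
    using assms(2) unfolding loop_homotopic_def prod_top_of_set by blast
  let ?D = "{0..1::real} \<times> {0..1::real}"
  have c1: "continuous_map (top_of_set ?D) X (\<lambda>z. h1 (min 1 (2 * fst z), snd z))"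
    by (rule continuous_map_comp_real[OF _ _ h1(1)]) (auto intro!: continuous_intros)
  have c2: "continuous_map (top_of_set ?D) X (\<lambda>z. h2 (max 0 (2 * fst z - 1), snd z))"
    by (rule continuous_map_comp_real[OF _ _ h2(1)]) (auto intro!: continuous_intros)
  have c: "continuous_map (top_of_set ?D) X
     (\<lambda>z. if fst z \<le> 1/2 then h1 (min 1 (2 * fst z), snd z) else h2 (max 0 (2 * fst z - 1), snd z))"
  proof (rule continuous_map_cases_le)
    show "continuous_map (top_of_set ?D) euclideanreal fst"
      by (simp add: continuous_on_fst continuous_on_id)
    show "continuous_map (top_of_set ?D) euclideanreal (\<lambda>z. 1/2)" by simp
    show "continuous_map (subtopology (top_of_set ?D) {z \<in> topspace (top_of_set ?D). fst z \<le> 1/2}) X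
        (\<lambda>z. h1 (min 1 (2 * fst z), snd z))"
      by (rule continuous_map_from_subtopology[OF c1])
    show "continuous_map (subtopology (top_of_set ?D) {z \<in> topspace (top_of_set ?D). 1/2 \<le> fst z}) X
        (\<lambda>z. h2 (max 0 (2 * fst z - 1), snd z))"
      by (rule continuous_map_from_subtopology[OF c2])
    fix z assume "z \<in> topspace (top_of_set ?D)" "fst z = 1/2"
    then show "h1 (min 1 (2 * fst z), snd z) = h2 (max 0 (2 * fst z - 1), snd z)"
      using h1(2) h2(2) by (cases z) auto
  qed
  show ?thesis unfolding loop_homotopic_def prod_top_of_set
    apply (rule exI[of _ "\<lambda>z. if fst z \<le> 1/2 then h1 (min 1 (2 * fst z), snd z) else h2 (max 0 (2 * fst z - 1), snd z)"])
    using c h1 h2 by auto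
qed

lemma loop_homotopic_compose:
  assumes "loop_homotopic X x g g'" "continuous_map X Y f"
  shows "loop_homotopic Y (f x) (f \<circ> g) (f \<circ> g')"
proof -
  obtain h where h: "continuous_map (prod_topology (top_of_set {0..1::real}) (top_of_set {0..1::real})) X h"
    "\<forall>s\<in>{0..1}. h (0, s) = g s \<and> h (1, s) = g' s" "\<forall>t\<in>{0..1}. h (t, 0) = x \<and> h (t, 1) = x"
    using assms unfolding loop_homotopic_def by blast
  have c: "continuous_map (prod_topology (top_of_set {0..1::real}) (top_of_set {0..1::real})) Y (f \<circ> h)"
    by (rule continuous_map_compose[OF h(1) assms(2)])
  have e1: "\<forall>s\<in>{0..1}. (f \<circ> h) (0, s) = (f \<circ> g) s \<and> (f \<circ> h) (1, s) = (f \<circ> g') s"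
    using h(2) by simp
  have e2: "\<forall>t\<in>{0..1}. (f \<circ> h) (t, 0) = f x \<and> (f \<circ> h) (t, 1) = f x"
    using h(3) by simp
  show ?thesis unfolding loop_homotopic_def
    by (rule exI[of _ "f \<circ> h"]) (intro conjI c e1 e2)
qed

lemma loops_compose:
  assumes "g \<in> loops X x" "continuous_map X Y f" shows "f \<circ> g \<in> loops Y (f x)"
proof -
  have "continuous_map (top_of_set {0..1}) Y (f \<circ> g)"
    by (rule continuous_map_compose[OF loops_pathin[OF assms(1)] assms(2)])
  then show ?thesis using assms(1) unfolding loops_def pathin_def by simp
qed

lemma loop_class_eq:
  assumes "loop_homotopic X x g1 g2"
  shows "loop_class X x g1 = loop_class X x g2"
proof (rule set_eqI)
  fix g
  have "loop_homotopic X x g1 g \<longleftrightarrow> loop_homotopic X x g2 g"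
    using assms loop_homotopic_trans loop_homotopic_sym by metis
  then show "g \<in> loop_class X x g1 \<longleftrightarrow> g \<in> loop_class X x g2"
    unfolding loop_class_def by simp
qed

lemma loop_class_self: "g \<in> loops X x \<Longrightarrow> g \<in> loop_class X x g"
  by (simp add: loop_class_def loop_homotopic_refl)

section \<open>Fundamental group\<close>

lemma topspace_pi1_top: "topspace (pi1_top X x) = loop_class X x ` loops X x"
  unfolding pi1_top_def topspace_quotient_topology topspace_loop_space ..

lemma openin_pi1_top_preimage:
  "openin (pi1_top X x) W \<Longrightarrow> openin (loop_space X x) {g \<in> loops X x. loop_class X x g \<in> W}"
  unfolding pi1_top_def openin_quotient_topology topspace_loop_space by blast

locale qs =
  fixes X :: "'a topology" and A :: "'a set" and a :: 'a
  assumes openA: "openin X A"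
    and pcA: "path_connectedin X (X closure_of A)"
    and aA: "a \<in> A"
begin

abbreviation "Y \<equiv> quotient_space X A"
abbreviation "p \<equiv> collapse A"
abbreviation "E \<equiv> collapse A ` (X closure_of A)"

lemma A_sub: "A \<subseteq> topspace X"
  using openA openin_subset by blast

lemma A_cl: "A \<subseteq> X closure_of A"
  using A_sub closure_of_subset by blast

lemma cl_sub: "X closure_of A \<subseteq> topspace X"
  by (rule closure_of_subset_topspace)

lemma p_A: "x \<in> A \<Longrightarrow> p x = A"
  by (simp add: collapse_def)

lemma p_nA: "x \<notin> A \<Longrightarrow> p x = {x}"
  by (simp add: collapse_def)

lemma sing_neq: "x \<notin> A \<Longrightarrow> {x} \<noteq> A"
  by blast

lemma peq: "p x = p v \<Longrightarrow> (x \<in> A \<longleftrightarrow> v \<in> A) \<and> (x \<notin> A \<longrightarrow> x = v)"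
  unfolding collapse_def by (auto split: if_splits)

lemma topY: "topspace Y = p ` topspace X"
  unfolding quotient_space_def topspace_quotient_topology ..

lemma openY: "openin Y U \<longleftrightarrow> U \<subseteq> p ` topspace X \<and> openin X {x \<in> topspace X. p x \<in> U}"
  unfolding quotient_space_def openin_quotient_topology ..

lemma contp: "continuous_map X Y p"
  unfolding quotient_space_def by (rule continuous_map_quotient)

lemma A_topY: "A \<in> topspace Y"
  using aA A_sub p_A topY by (metis image_eqI subsetD)

lemma pa: "p a = A" using aA by (rule p_A)

lemma star_open: "openin Y {A}"
proof -
  have "{x \<in> topspace X. p x \<in> {A}} = A"
    using A_sub p_A p_nA sing_neq by auto
  then show ?thesis unfolding openY using A_topY topY openA by auto
qed

lemma pE: "x \<in> topspace X \<Longrightarrow> (p x \<in> E \<longleftrightarrow> x \<in> X closure_of A)"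
proof
  assume "p x \<in> E"
  then obtain z where z: "z \<in> X closure_of A" "p x = p z" by blast
  show "x \<in> X closure_of A"
  proof (cases "x \<in> A")
    case True then show ?thesis using A_cl by blast
  next
    case False then show ?thesis using peq[OF z(2)] z(1) by metis
  qed
qed auto

lemma E_closed: "closedin Y E"
proof -
  have "E \<subseteq> topspace Y" using cl_sub topY by blast
  moreover have "{x \<in> topspace X. p x \<in> topspace Y - E} = topspace X - X closure_of A"
    using pE topY by auto
  moreover have "openin X (topspace X - X closure_of A)"
    by (simp add: openin_diff)
  ultimately show ?thesis unfolding closedin_def openY using topY by auto
qed

lemma E_star: "openin Y U \<Longrightarrow> y \<in> U \<Longrightarrow> y \<in> E \<Longrightarrow> A \<in> U"
proof -
  assume U: "openin Y U" "y \<in> U" "y \<in> E"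
  then obtain z where z: "z \<in> X closure_of A" "y = p z" by (auto simp: image_iff)
  have W: "openin X {x \<in> topspace X. p x \<in> U}" using U(1) unfolding openY by (rule conjunct2)
  have zt: "z \<in> topspace X" by (rule subsetD[OF cl_sub z(1)])
  have "z \<in> {x \<in> topspace X. p x \<in> U}" using zt z(2) U(2) by simp
  moreover have "\<forall>T. z \<in> T \<and> openin X T \<longrightarrow> (\<exists>y. y \<in> A \<and> y \<in> T)"
    using z(1) by (simp add: in_closure_of)
  ultimately obtain w where "w \<in> A" "w \<in> {x \<in> topspace X. p x \<in> U}"
    using W by meson
  then show "A \<in> U" using p_A by auto
qed

lemma A_E: "A \<in> E" using aA A_cl pa by (metis image_eqI subsetD)

lemma lift:
  assumes "y \<in> topspace Y" "y \<noteq> A"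
  shows "the_elem y \<notin> A \<and> the_elem y \<in> topspace X \<and> p (the_elem y) = y"
proof -
  obtain x where x: "x \<in> topspace X" "y = p x" using assms(1) topY by blast
  have "x \<notin> A" using x assms(2) p_A by blast
  then show ?thesis using x p_nA by simp
qed

lemma lift_E:
  assumes "y \<in> E" "y \<noteq> A"
  shows "the_elem y \<in> X closure_of A"
proof -
  have "y \<in> topspace Y" using assms(1) cl_sub topY by blast
  then have "the_elem y \<in> topspace X" "p (the_elem y) = y" using lift assms(2) by blast+
  then show ?thesis using pE assms(1) by metis
qed

lemma lift_cont:
  assumes g: "continuous_map Z Y g" and ne: "\<forall>z\<in>topspace Z. g z \<noteq> A"
  shows "continuous_map Z X (\<lambda>z. the_elem (g z))"
  unfolding continuous_map_def
proof (intro conjI allI impI)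
  show "(\<lambda>z. the_elem (g z)) \<in> topspace Z \<rightarrow> topspace X"
    using lift ne continuous_map_funspace[OF g] by blast
next
  fix V assume V: "openin X V"
  let ?U = "p ` (V \<union> A)"
  have Vs: "V \<subseteq> topspace X" using V openin_subset by blast
  have pre: "{x \<in> topspace X. p x \<in> ?U} = V \<union> A"
  proof (rule set_eqI)
    fix x
    show "x \<in> {x \<in> topspace X. p x \<in> ?U} \<longleftrightarrow> x \<in> V \<union> A"
    proof
      assume "x \<in> {x \<in> topspace X. p x \<in> ?U}"
      then obtain v where v: "v \<in> V \<union> A" "p x = p v" by blast
      show "x \<in> V \<union> A" using peq[OF v(2)] v(1) by blast
    next
      assume "x \<in> V \<union> A" then show "x \<in> {x \<in> topspace X. p x \<in> ?U}" using Vs A_sub by blast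
    qed
  qed
  have Uo: "openin Y ?U" unfolding openY pre using Vs A_sub V openA by auto
  have "{z \<in> topspace Z. the_elem (g z) \<in> V} = {z \<in> topspace Z. g z \<in> ?U}"
  proof (rule set_eqI)
    fix z
    show "z \<in> {z \<in> topspace Z. the_elem (g z) \<in> V} \<longleftrightarrow> z \<in> {z \<in> topspace Z. g z \<in> ?U}"
    proof (cases "z \<in> topspace Z")
      case True
      then have gz: "g z \<in> topspace Y" "g z \<noteq> A" using continuous_map_funspace[OF g] ne by auto
      then have l: "the_elem (g z) \<notin> A" "the_elem (g z) \<in> topspace X" "p (the_elem (g z)) = g z"
        using lift by blast+
      have "g z \<in> ?U \<longleftrightarrow> the_elem (g z) \<in> V"
      proof
        assume "g z \<in> ?U"
        then have "p (the_elem (g z)) \<in> ?U" using l(3) by simp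
        then have "the_elem (g z) \<in> V \<union> A" using pre l(2) by blast
        then show "the_elem (g z) \<in> V" using l(1) by blast
      next
        assume "the_elem (g z) \<in> V" then show "g z \<in> ?U" using l(3) by (metis UnI1 image_eqI)
      qed
      then show ?thesis using True by simp
    qed simp
  qed
  then show "openin Z {z \<in> topspace Z. the_elem (g z) \<in> V}"
    using openin_continuous_map_preimage[OF g Uo] by simp
qed

end

context qs begin

lemma path_clA:
  assumes "x \<in> X closure_of A" "y \<in> X closure_of A"
  shows "\<exists>\<gamma>. pathin X \<gamma> \<and> \<gamma> \<in> {0..1} \<rightarrow> X closure_of A \<and> \<gamma> 0 = x \<and> \<gamma> 1 = y"
proof -
  have "\<forall>x \<in> X closure_of A. \<forall>y \<in> X closure_of A. \<exists>g. pathin X g \<and> g \<in> {0..1} \<rightarrow> X closure_of A \<and> g 0 = x \<and> g 1 = y"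
    using pcA unfolding path_connectedin by (rule conjunct2)
  then show ?thesis using assms by simp
qed

lemma a_cl: "a \<in> X closure_of A" using aA A_cl by (rule subsetD[rotated])

lemma beta_top:
  assumes "continuous_map (top_of_set {0..1}) Y \<beta>" "t \<in> {0..1}"
  shows "\<beta> t \<in> topspace Y"
  using continuous_map_funspace[OF assms(1)] assms(2) by auto

lemma alpha_aux:
  fixes \<beta> :: "real \<Rightarrow> 'a set" and dd :: "real \<Rightarrow> real" and L :: "real set"
  assumes \<beta>c: "continuous_map (top_of_set {0..1}) Y \<beta>"
  shows "finite L \<Longrightarrow> (\<forall>l\<in>L. 0 < l \<and> l < dd l \<and> dd l < 1) \<Longrightarrow> (\<forall>l\<in>L. \<forall>t\<in>{l..dd l}. \<beta> t \<noteq> A)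
    \<Longrightarrow> (\<forall>l1\<in>L. \<forall>l2\<in>L. l1 < l2 \<longrightarrow> dd l1 \<le> l2) \<Longrightarrow> (\<forall>l\<in>L. \<beta> l \<in> E \<and> \<beta> (dd l) \<in> E)
    \<Longrightarrow> 0 \<le> u \<Longrightarrow> u < 1 \<Longrightarrow> (\<forall>l\<in>L. u \<le> l) \<Longrightarrow> x \<in> X closure_of A \<Longrightarrow> (u \<in> L \<longrightarrow> x = the_elem (\<beta> u))
    \<Longrightarrow> \<exists>\<alpha>. continuous_map (top_of_set {u..1}) X \<alpha> \<and> \<alpha> u = x \<and> \<alpha> 1 = a \<and>
          (\<forall>t\<in>{u<..1}. (t \<in> (\<Union>l\<in>L. {l..dd l}) \<longrightarrow> p (\<alpha> t) = \<beta> t) \<and>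
                       (t \<notin> (\<Union>l\<in>L. {l..dd l}) \<longrightarrow> \<alpha> t \<in> X closure_of A))"
proof (induction L arbitrary: u x rule: finite_linorder_min_induct)
  case empty
  have u1: "u < 1" and xc: "x \<in> X closure_of A" using empty.prems by simp_all
  obtain \<gamma> where \<gamma>: "pathin X \<gamma>" "\<gamma> \<in> {0..1} \<rightarrow> X closure_of A" "\<gamma> 0 = x" "\<gamma> 1 = a"
    using path_clA[OF xc a_cl] by blast
  define \<phi> where "\<phi> t = max 0 (min 1 ((t - u) * (1 / (1 - u))))" for t :: real
  have \<phi>c: "continuous_on {u..1} \<phi>" unfolding \<phi>_def by (intro continuous_intros)
  have \<phi>i: "\<phi> ` {u..1} \<subseteq> {0..1}" unfolding \<phi>_def by auto
  have \<gamma>c: "continuous_map (top_of_set {0..1}) X \<gamma>" using \<gamma>(1) by (simp add: pathin_def)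
  have c: "continuous_map (top_of_set {u..1}) X (\<lambda>t. \<gamma> (\<phi> t))"
    by (rule continuous_map_comp_real[OF \<phi>c \<phi>i \<gamma>c])
  have \<phi>u: "\<phi> u = 0" unfolding \<phi>_def by simp
  have \<phi>1: "\<phi> 1 = 1" unfolding \<phi>_def using u1 by simp
  have inA: "\<gamma> (\<phi> t) \<in> X closure_of A" for t
  proof -
    have "\<phi> t \<in> {0..1}" unfolding \<phi>_def by simp
    then show ?thesis using \<gamma>(2) by blast
  qed
  show ?case
    by (rule exI[of _ "\<lambda>t. \<gamma> (\<phi> t)"]) (simp add: c \<phi>u \<phi>1 \<gamma>(3,4) inA)
next
  case (insert b L)
  have hb: "0 < b" "b < dd b" "dd b < 1" using insert.prems(1) by simp_all
  have hne: "\<forall>t\<in>{b..dd b}. \<beta> t \<noteq> A" using insert.prems(2) by simp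
  have hE: "\<beta> b \<in> E" "\<beta> (dd b) \<in> E" using insert.prems(4) by simp_all
  have hL1: "\<forall>l\<in>L. 0 < l \<and> l < dd l \<and> dd l < 1" using insert.prems(1) by simp
  have hL2: "\<forall>l\<in>L. \<forall>t\<in>{l..dd l}. \<beta> t \<noteq> A" using insert.prems(2) by simp
  have hL3: "\<forall>l1\<in>L. \<forall>l2\<in>L. l1 < l2 \<longrightarrow> dd l1 \<le> l2" using insert.prems(3) by simp
  have hL4: "\<forall>l\<in>L. \<beta> l \<in> E \<and> \<beta> (dd l) \<in> E" using insert.prems(4) by simp
  have hord: "\<forall>l\<in>L. dd b \<le> l" using insert.prems(3) insert.hyps(2) by simp
  have u0: "0 \<le> u" and ub: "u \<le> b" and xc: "x \<in> X closure_of A" using insert.prems(5,7,8) by simp_all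
  have hx: "u = b \<Longrightarrow> x = the_elem (\<beta> b)" using insert.prems(9) by simp
  have b01: "b \<in> {0..1}" "dd b \<in> {0..1}" using hb by simp_all
  define xb where "xb = the_elem (\<beta> b)"
  define xd where "xd = the_elem (\<beta> (dd b))"
  have neb: "\<beta> b \<noteq> A" "\<beta> (dd b) \<noteq> A" using hne hb by simp_all
  have pxb: "p xb = \<beta> b" unfolding xb_def using lift[OF beta_top[OF \<beta>c b01(1)] neb(1)] by simp
  have xbc: "xb \<in> X closure_of A" unfolding xb_def by (rule lift_E[OF hE(1) neb(1)])
  have xdc: "xd \<in> X closure_of A" unfolding xd_def by (rule lift_E[OF hE(2) neb(2)])
  obtain \<alpha>' where \<alpha>': "continuous_map (top_of_set {dd b..1}) X \<alpha>'" "\<alpha>' (dd b) = xd" "\<alpha>' 1 = a"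
    "\<forall>t\<in>{dd b<..1}. (t \<in> (\<Union>l\<in>L. {l..dd l}) \<longrightarrow> p (\<alpha>' t) = \<beta> t) \<and>
                       (t \<notin> (\<Union>l\<in>L. {l..dd l}) \<longrightarrow> \<alpha>' t \<in> X closure_of A)"
  proof -
    have "0 \<le> dd b" "dd b < 1" using hb by simp_all
    from insert.IH[OF hL1 hL2 hL3 hL4 this hord xdc] show ?thesis
      using that unfolding xd_def by blast
  qed
  obtain \<gamma> where \<gamma>: "pathin X \<gamma>" "\<gamma> \<in> {0..1} \<rightarrow> X closure_of A" "\<gamma> 0 = x" "\<gamma> 1 = xb"
    using path_clA[OF xc xbc] by blast
  have \<gamma>c: "continuous_map (top_of_set {0..1}) X \<gamma>" using \<gamma>(1) by (simp add: pathin_def)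
  define \<phi> where "\<phi> t = max 0 (min 1 ((t - u) * (1 / (b - u))))" for t :: real
  define cl2 where "cl2 t = max b (min (dd b) t)" for t :: real
  have \<phi>c: "continuous_on {u..1} \<phi>" unfolding \<phi>_def by (intro continuous_intros)
  have \<phi>i: "\<phi> ` {u..1} \<subseteq> {0..1}" unfolding \<phi>_def by auto
  have c1: "continuous_map (top_of_set {u..1}) X (\<lambda>t. \<gamma> (\<phi> t))"
    by (rule continuous_map_comp_real[OF \<phi>c \<phi>i \<gamma>c])
  have cl2c: "continuous_on {u..1} cl2" unfolding cl2_def by (intro continuous_intros)
  have cl2i: "cl2 ` {u..1} \<subseteq> {0..1}" unfolding cl2_def using hb by auto
  have cl2b: "cl2 t \<in> {b..dd b}" for t unfolding cl2_def using hb by simp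
  have c2': "continuous_map (top_of_set {u..1}) Y (\<lambda>t. \<beta> (cl2 t))"
    by (rule continuous_map_comp_real[OF cl2c cl2i \<beta>c])
  have c2: "continuous_map (top_of_set {u..1}) X (\<lambda>t. the_elem (\<beta> (cl2 t)))"
  proof (rule lift_cont[OF c2'])
    show "\<forall>z\<in>topspace (top_of_set {u..1}). \<beta> (cl2 z) \<noteq> A" using cl2b hne by blast
  qed
  have mc: "continuous_on {u..1} (\<lambda>t. max (dd b) t)" by (intro continuous_intros)
  have mi: "(\<lambda>t. max (dd b) t) ` {u..1} \<subseteq> {dd b..1}" using hb by auto
  have c3: "continuous_map (top_of_set {u..1}) X (\<lambda>t. \<alpha>' (max (dd b) t))"
    by (rule continuous_map_comp_real[OF mc mi \<alpha>'(1)])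
  have \<phi>b: "\<gamma> (\<phi> b) = xb"
  proof (cases "u = b")
    case True
    then show ?thesis using hx \<gamma>(3) unfolding \<phi>_def xb_def by simp
  next
    case False
    then have "u < b" using ub by simp
    then have "\<phi> b = 1" unfolding \<phi>_def by simp
    then show ?thesis using \<gamma>(4) by simp
  qed
  have cl2t: "t \<in> {b..dd b} \<Longrightarrow> cl2 t = t" for t unfolding cl2_def by simp
  have c23: "continuous_map (top_of_set {u..1}) X
     (\<lambda>t. if t \<le> dd b then the_elem (\<beta> (cl2 t)) else \<alpha>' (max (dd b) t))"
  proof (rule continuous_map_cases_le[where p="\<lambda>t. t" and q="\<lambda>t. dd b"])
    show "continuous_map (top_of_set {u..1}) euclideanreal (\<lambda>t. t)" by simp
    show "continuous_map (top_of_set {u..1}) euclideanreal (\<lambda>t. dd b)" by simp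
    show "continuous_map (subtopology (top_of_set {u..1}) {t \<in> topspace (top_of_set {u..1}). t \<le> dd b}) X
        (\<lambda>t. the_elem (\<beta> (cl2 t)))" by (rule continuous_map_from_subtopology[OF c2])
    show "continuous_map (subtopology (top_of_set {u..1}) {t \<in> topspace (top_of_set {u..1}). dd b \<le> t}) X
        (\<lambda>t. \<alpha>' (max (dd b) t))" by (rule continuous_map_from_subtopology[OF c3])
    fix t assume "t \<in> topspace (top_of_set {u..1})" "t = dd b"
    then show "the_elem (\<beta> (cl2 t)) = \<alpha>' (max (dd b) t)"
      using cl2t[of "dd b"] hb \<alpha>'(2) unfolding xd_def by simp
  qed
  define \<alpha> where "\<alpha> t = (if t \<le> b then \<gamma> (\<phi> t) else
       (if t \<le> dd b then the_elem (\<beta> (cl2 t)) else \<alpha>' (max (dd b) t)))" for t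
  have c: "continuous_map (top_of_set {u..1}) X \<alpha>"
    unfolding \<alpha>_def
  proof (rule continuous_map_cases_le[where p="\<lambda>t. t" and q="\<lambda>t. b"])
    show "continuous_map (top_of_set {u..1}) euclideanreal (\<lambda>t. t)" by simp
    show "continuous_map (top_of_set {u..1}) euclideanreal (\<lambda>t. b)" by simp
    show "continuous_map (subtopology (top_of_set {u..1}) {t \<in> topspace (top_of_set {u..1}). t \<le> b}) X
        (\<lambda>t. \<gamma> (\<phi> t))" by (rule continuous_map_from_subtopology[OF c1])
    show "continuous_map (subtopology (top_of_set {u..1}) {t \<in> topspace (top_of_set {u..1}). b \<le> t}) X
        (\<lambda>t. if t \<le> dd b then the_elem (\<beta> (cl2 t)) else \<alpha>' (max (dd b) t))"
      by (rule continuous_map_from_subtopology[OF c23])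
    fix t assume "t \<in> topspace (top_of_set {u..1})" "t = b"
    then show "\<gamma> (\<phi> t) = (if t \<le> dd b then the_elem (\<beta> (cl2 t)) else \<alpha>' (max (dd b) t))"
      using \<phi>b cl2t[of b] hb unfolding xb_def by simp
  qed
  have \<alpha>u: "\<alpha> u = x" unfolding \<alpha>_def \<phi>_def using ub \<gamma>(3) by simp
  have \<alpha>1: "\<alpha> 1 = a" unfolding \<alpha>_def using hb \<alpha>'(3) by simp
  have vals: "(t \<in> (\<Union>l\<in>insert b L. {l..dd l}) \<longrightarrow> p (\<alpha> t) = \<beta> t) \<and>
              (t \<notin> (\<Union>l\<in>insert b L. {l..dd l}) \<longrightarrow> \<alpha> t \<in> X closure_of A)"
    if t: "t \<in> {u<..1}" for t
  proof -
    consider "t \<le> b" | "b < t" "t \<le> dd b" | "dd b < t" by linarith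
    then show ?thesis
    proof cases
      case 1
      have notL: "t \<notin> (\<Union>l\<in>L. {l..dd l})"
      proof
        assume "t \<in> (\<Union>l\<in>L. {l..dd l})"
        then obtain l where "l \<in> L" "l \<le> t" by auto
        then show False using insert.hyps(2) 1 by force
      qed
      have e: "\<alpha> t = \<gamma> (\<phi> t)" unfolding \<alpha>_def using 1 by simp
      have ic: "\<alpha> t \<in> X closure_of A"
      proof -
        have "\<phi> t \<in> {0..1}" unfolding \<phi>_def by simp
        then have "\<gamma> (\<phi> t) \<in> X closure_of A" using \<gamma>(2) by blast
        then show ?thesis using e by simp
      qed
      have "t \<in> (\<Union>l\<in>insert b L. {l..dd l}) \<Longrightarrow> p (\<alpha> t) = \<beta> t"
      proof -
        assume "t \<in> (\<Union>l\<in>insert b L. {l..dd l})"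
        then have "t \<in> {b..dd b} \<or> t \<in> (\<Union>l\<in>L. {l..dd l})" by simp
        then have "t \<in> {b..dd b}" using notL by blast
        then have "t = b" using 1 by simp
        then show ?thesis using e \<phi>b pxb by simp
      qed
      then show ?thesis using ic by blast
    next
      case 2
      have e: "\<alpha> t = the_elem (\<beta> t)" unfolding \<alpha>_def using 2 cl2t[of t] by simp
      have t01: "t \<in> {0..1}" using 2 hb by simp
      have "\<beta> t \<noteq> A" using hne 2 by simp
      then have "p (\<alpha> t) = \<beta> t" using e lift[OF beta_top[OF \<beta>c t01]] by simp
      moreover have "t \<in> (\<Union>l\<in>insert b L. {l..dd l})" using 2 by simp
      ultimately show ?thesis by blast
    next
      case 3
      have e: "\<alpha> t = \<alpha>' t" unfolding \<alpha>_def using 3 hb by simp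
      have t': "t \<in> {dd b<..1}" using 3 t by simp
      have "t \<in> (\<Union>l\<in>insert b L. {l..dd l}) \<longleftrightarrow> t \<in> (\<Union>l\<in>L. {l..dd l})" using 3 by simp
      then show ?thesis using \<alpha>'(4) t' e by simp
    qed
  qed
  show ?case
    by (rule exI[of _ \<alpha>]) (use c \<alpha>u \<alpha>1 vals in blast)
qed

end

lemma spec_homotopy:
  assumes f: "continuous_map (top_of_set {0..1}) Z f" and g: "continuous_map (top_of_set {0..1}) Z g"
    and sp: "\<forall>t\<in>{0..1}. \<forall>U. openin Z U \<longrightarrow> f t \<in> U \<longrightarrow> g t \<in> U"
    and y: "f 0 = y" "g 0 = y" "f 1 = y" "g 1 = y"
  shows "loop_homotopic Z y f g"
proof -
  define I where "I = {0..1::real}"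
  define H where "H z = (if fst z = 0 then f (snd z) else g (snd z))" for z :: "real \<times> real"
  have Hc: "continuous_map (top_of_set (I \<times> I)) Z H"
    unfolding continuous_map_def
  proof (intro conjI allI impI)
    show "H \<in> topspace (top_of_set (I \<times> I)) \<rightarrow> topspace Z"
      using continuous_map_funspace[OF f] continuous_map_funspace[OF g] unfolding H_def I_def by (auto simp: Pi_iff)
  next
    fix U assume U: "openin Z U"
    have eq: "{z \<in> topspace (top_of_set (I \<times> I)). H z \<in> U} =
        (I \<times> {t \<in> I. f t \<in> U}) \<union> ((I \<inter> - {0}) \<times> {t \<in> I. g t \<in> U})"
    proof (rule set_eqI)
      fix z :: "real \<times> real"
      obtain r t where z: "z = (r, t)" by (cases z)
      show "z \<in> {z \<in> topspace (top_of_set (I \<times> I)). H z \<in> U} \<longleftrightarrow>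
            z \<in> (I \<times> {t \<in> I. f t \<in> U}) \<union> ((I \<inter> - {0}) \<times> {t \<in> I. g t \<in> U})"
      proof (cases "r = 0")
        case True
        then show ?thesis unfolding z H_def by auto
      next
        case False
        have "t \<in> I \<Longrightarrow> f t \<in> U \<Longrightarrow> g t \<in> U" using sp U unfolding I_def by blast
        then show ?thesis unfolding z H_def using False by auto
      qed
    qed
    have o1: "openin (top_of_set I) {t \<in> I. f t \<in> U}"
      using openin_continuous_map_preimage[OF f U] unfolding I_def by simp
    have o2: "openin (top_of_set I) {t \<in> I. g t \<in> U}"
      using openin_continuous_map_preimage[OF g U] unfolding I_def by simp
    have o3: "openin (top_of_set I) (I \<inter> - {0})" by (rule openin_open_Int) auto
    have o4: "openin (top_of_set I) I" by (metis openin_topspace topspace_euclidean_subtopology)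
    show "openin (top_of_set (I \<times> I)) {z \<in> topspace (top_of_set (I \<times> I)). H z \<in> U}"
      unfolding eq by (intro openin_Un openin_Times o1 o2 o3 o4)
  qed
  show ?thesis unfolding loop_homotopic_def prod_top_of_set
    by (rule exI[of _ H]) (use Hc y in \<open>simp add: H_def I_def\<close>)
qed

context qs begin

lemma core:
  assumes \<beta>: "\<beta> \<in> loops Y A" and Pf: "finite P"
    and P: "\<forall>z\<in>P. compactin (top_of_set {0..1::real}) (fst z) \<and> openin Y (snd z) \<and> \<beta> ` fst z \<subseteq> snd z"
  shows "\<exists>\<alpha> \<beta>'. \<alpha> \<in> loops X a \<and> \<beta>' \<in> loops Y A \<and> (\<forall>z\<in>P. \<beta>' ` fst z \<subseteq> snd z) \<and> loop_homotopic Y A (p \<circ> \<alpha>) \<beta>'"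
proof -
  have \<beta>c: "continuous_map (top_of_set {0..1}) Y \<beta>" by (rule loops_pathin[OF \<beta>])
  have \<beta>0: "\<beta> 0 = A" and \<beta>1: "\<beta> 1 = A" using \<beta> unfolding loops_def by simp_all
  define T where "T = {t \<in> {0..1::real}. \<beta> t \<in> E}"
  have Tsub: "T \<subseteq> {0..1}" unfolding T_def by blast
  have "closedin (top_of_set {0..1::real}) T"
    using closedin_continuous_map_preimage[OF \<beta>c E_closed] unfolding T_def by simp
  then have Tc: "closed T" by (rule closedin_closed_trans) simp
  have T0: "0 \<in> T" and T1: "1 \<in> T" unfolding T_def using \<beta>0 \<beta>1 A_E by simp_all
  have TA: "t \<in> {0..1} \<Longrightarrow> \<beta> t = A \<Longrightarrow> t \<in> T" for t unfolding T_def using A_E by simp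
  define Oset where "Oset = {t \<in> {0..1::real}. \<beta> t \<in> {A}}"
  have Oo: "openin (top_of_set {0..1::real}) Oset"
    using openin_continuous_map_preimage[OF \<beta>c star_open] unfolding Oset_def by simp
  define c where "c k = Sup (T \<inter> {0..k})" for k
  define d where "d k = Inf (T \<inter> {k..1})" for k
  have cprops: "c k \<in> T \<and> c k < k \<and> (\<forall>t. c k < t \<and> t \<le> k \<longrightarrow> t \<notin> T)"
    if k: "k \<in> {0..1}" "k \<notin> T" for k
  proof -
    let ?S = "T \<inter> {0..k}"
    have ne: "?S \<noteq> {}" using T0 k by auto
    have bd: "bdd_above ?S" by (rule bdd_aboveI[of _ k]) auto
    have cs: "closed ?S" using Tc by (intro closed_Int) auto
    have cin: "c k \<in> ?S" unfolding c_def by (rule closed_contains_Sup[OF ne bd cs])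
    then have "c k \<le> k" "c k \<in> T" "0 \<le> c k" by auto
    then have "c k < k" using k(2) by (cases "c k = k") auto
    moreover have "t \<notin> T" if "c k < t" "t \<le> k" for t
    proof
      assume "t \<in> T"
      then have "t \<in> ?S" using that \<open>0 \<le> c k\<close> by auto
      then have "t \<le> c k" unfolding c_def using bd by (rule cSup_upper)
      then show False using that by simp
    qed
    ultimately show ?thesis using \<open>c k \<in> T\<close> by blast
  qed
  have dprops: "d k \<in> T \<and> k < d k \<and> (\<forall>t. k \<le> t \<and> t < d k \<longrightarrow> t \<notin> T)"
    if k: "k \<in> {0..1}" "k \<notin> T" for k
  proof -
    let ?S = "T \<inter> {k..1}"
    have ne: "?S \<noteq> {}" using T1 k by auto
    have bd: "bdd_below ?S" by (rule bdd_belowI[of _ k]) auto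
    have cs: "closed ?S" using Tc by (intro closed_Int) auto
    have cin: "d k \<in> ?S" unfolding d_def by (rule closed_contains_Inf[OF ne bd cs])
    then have "k \<le> d k" "d k \<in> T" "d k \<le> 1" by auto
    then have "k < d k" using k(2) by (cases "d k = k") auto
    moreover have "t \<notin> T" if "k \<le> t" "t < d k" for t
    proof
      assume "t \<in> T"
      then have "t \<in> ?S" using that \<open>d k \<le> 1\<close> by auto
      then have "d k \<le> t" unfolding d_def using bd by (rule cInf_lower)
      then show False using that by simp
    qed
    ultimately show ?thesis using \<open>d k \<in> T\<close> by blast
  qed
  have gapT: "t \<notin> T" if k: "k \<in> {0..1}" "k \<notin> T" and t: "c k < t" "t < d k" for k t
  proof (cases "t \<le> k")
    case True then show ?thesis using cprops[OF k] t by blast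
  next
    case False then show ?thesis using dprops[OF k] t by simp
  qed
  have cne: "\<beta> (c k) \<noteq> A" if k: "k \<in> {0..1}" "k \<notin> T" for k
  proof
    assume eq: "\<beta> (c k) = A"
    have ck: "c k \<in> T" "c k < k" using cprops[OF k] by auto
    have "c k \<in> Oset" using ck Tsub eq unfolding Oset_def by auto
    then obtain e where e: "e > 0" "\<forall>x'\<in>{0..1}. dist x' (c k) < e \<longrightarrow> x' \<in> Oset"
      using Oo unfolding openin_euclidean_subtopology_iff by blast
    define t where "t = min k (c k + e / 2)"
    have t: "c k < t" "t \<le> k" unfolding t_def using ck e by auto
    have t01: "t \<in> {0..1}" using t k ck Tsub by auto
    have "dist t (c k) < e" unfolding t_def dist_real_def using ck e by auto
    then have "t \<in> Oset" using e t01 by blast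
    then have "t \<in> T" using TA unfolding Oset_def by auto
    then show False using cprops[OF k] t by blast
  qed
  have dne: "\<beta> (d k) \<noteq> A" if k: "k \<in> {0..1}" "k \<notin> T" for k
  proof
    assume eq: "\<beta> (d k) = A"
    have dk: "d k \<in> T" "k < d k" using dprops[OF k] by auto
    have "d k \<in> Oset" using dk Tsub eq unfolding Oset_def by auto
    then obtain e where e: "e > 0" "\<forall>x'\<in>{0..1}. dist x' (d k) < e \<longrightarrow> x' \<in> Oset"
      using Oo unfolding openin_euclidean_subtopology_iff by blast
    define t where "t = max k (d k - e / 2)"
    have t: "k \<le> t" "t < d k" unfolding t_def using dk e by auto
    have t01: "t \<in> {0..1}" using t k dk Tsub by auto
    have "dist t (d k) < e" unfolding t_def dist_real_def using dk e by auto
    then have "t \<in> Oset" using e t01 by blast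
    then have "t \<in> T" using TA unfolding Oset_def by auto
    then show False using dprops[OF k] t by blast
  qed
  have c0: "0 < c k" if k: "k \<in> {0..1}" "k \<notin> T" for k
  proof -
    have "c k \<in> {0..1}" using cprops[OF k] Tsub by auto
    moreover have "c k \<noteq> 0" using cne[OF k] \<beta>0 by auto
    ultimately show ?thesis by simp
  qed
  have d1: "d k < 1" if k: "k \<in> {0..1}" "k \<notin> T" for k
  proof -
    have "d k \<in> {0..1}" using dprops[OF k] Tsub by auto
    moreover have "d k \<noteq> 1" using dne[OF k] \<beta>1 by auto
    ultimately show ?thesis by simp
  qed
  have comp1: "d k1 \<le> c k2" if k1: "k1 \<in> {0..1}" "k1 \<notin> T" and k2: "k2 \<in> {0..1}" "k2 \<notin> T"
    and lt: "c k1 < c k2" for k1 k2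
  proof (rule ccontr)
    assume "\<not> d k1 \<le> c k2"
    then have "c k2 \<notin> T" using gapT[OF k1 lt] by simp
    then show False using cprops[OF k2] by blast
  qed
  have comp2: "d k1 = d k2" if k1: "k1 \<in> {0..1}" "k1 \<notin> T" and k2: "k2 \<in> {0..1}" "k2 \<notin> T"
    and eq: "c k1 = c k2" for k1 k2
  proof (rule ccontr)
    assume ne: "d k1 \<noteq> d k2"
    show False
    proof (cases "d k1 < d k2")
      case True
      have "c k2 < d k1" using eq cprops[OF k1] dprops[OF k1] by simp
      then have "d k1 \<notin> T" using gapT[OF k2] True by blast
      then show False using dprops[OF k1] by blast
    next
      case False
      then have lt: "d k2 < d k1" using ne by simp
      have "c k1 < d k2" using eq cprops[OF k2] dprops[OF k2] by simp
      then have "d k2 \<notin> T" using gapT[OF k1] lt by blast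
      then show False using dprops[OF k2] by blast
    qed
  qed
  define Pb where "Pb = {z \<in> P. A \<notin> snd z}"
  define K0 where "K0 = \<Union> (fst ` Pb)"
  have K0c: "compact K0" unfolding K0_def
  proof (rule compact_Union)
    show "finite (fst ` Pb)" using Pf unfolding Pb_def by simp
  next
    fix K assume "K \<in> fst ` Pb"
    then have "compactin (top_of_set {0..1::real}) K" using P unfolding Pb_def by auto
    then show "compact K" by (simp add: compactin_subtopology)
  qed
  have K0sub: "k \<in> {0..1} \<and> k \<notin> T" if kK: "k \<in> K0" for k
  proof -
    obtain z where z0: "z \<in> Pb" "k \<in> fst z" using kK unfolding K0_def by blast
    then have z: "z \<in> P" "A \<notin> snd z" "k \<in> fst z" unfolding Pb_def by simp_all
    have "fst z \<subseteq> {0..1}"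
      using compactin_subset_topspace[of "top_of_set {0..1::real}" "fst z"] P z(1) by auto
    then have k01: "k \<in> {0..1}" using z(3) by blast
    have bU: "\<beta> k \<in> snd z" "openin Y (snd z)" using P z by auto
    have "k \<notin> T"
    proof
      assume "k \<in> T"
      then have "\<beta> k \<in> E" unfolding T_def by simp
      then show False using E_star[OF bU(2) bU(1)] z(2) by simp
    qed
    then show ?thesis using k01 by simp
  qed
  have cover: "K0 \<subseteq> (\<Union>k\<in>K0. {c k<..<d k})"
  proof
    fix k assume "k \<in> K0"
    then have kk: "k \<in> {0..1}" "k \<notin> T" using K0sub by auto
    have "k \<in> {c k<..<d k}" using cprops[OF kk] dprops[OF kk] by simp
    then show "k \<in> (\<Union>k\<in>K0. {c k<..<d k})" using \<open>k \<in> K0\<close> by blast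
  qed
  obtain P0 where P0: "P0 \<subseteq> K0" "finite P0" "K0 \<subseteq> (\<Union>k\<in>P0. {c k<..<d k})"
  proof (rule compactE_image[OF K0c _ cover])
    fix k show "open {c k<..<d k}" by simp
  next
    fix C' assume "C' \<subseteq> K0" "finite C'" "K0 \<subseteq> (\<Union>k\<in>C'. {c k<..<d k})"
    then show thesis by (rule that)
  qed
  have P0T: "k \<in> {0..1}" "k \<notin> T" if kP: "k \<in> P0" for k
    using K0sub[OF subsetD[OF P0(1) kP]] by simp_all
  define L where "L = c ` P0"
  define dd where "dd l = d (SOME k. k \<in> P0 \<and> c k = l)" for l
  have ddc: "dd (c k) = d k" if k: "k \<in> P0" for k
  proof -
    have "\<exists>k'. k' \<in> P0 \<and> c k' = c k" using k by blast
    then have sk: "(SOME k'. k' \<in> P0 \<and> c k' = c k) \<in> P0 \<and> c (SOME k'. k' \<in> P0 \<and> c k' = c k) = c k"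
      by (rule someI_ex)
    show ?thesis unfolding dd_def using comp2[OF P0T[OF conjunct1[OF sk]] P0T[OF k] conjunct2[OF sk]] by simp
  qed
  have Lf: "finite L" unfolding L_def using P0(2) by simp
  have i: "\<forall>l\<in>L. 0 < l \<and> l < dd l \<and> dd l < 1"
  proof
    fix l assume "l \<in> L"
    then obtain k where k: "k \<in> P0" "l = c k" unfolding L_def by blast
    show "0 < l \<and> l < dd l \<and> dd l < 1"
      using k ddc[OF k(1)] c0[OF P0T[OF k(1)]]
        d1[OF P0T[OF k(1)]]
        cprops[OF P0T[OF k(1)]]
        dprops[OF P0T[OF k(1)]] by simp
  qed
  have ii: "\<forall>l\<in>L. \<forall>t\<in>{l..dd l}. \<beta> t \<noteq> A"
  proof (intro ballI)
    fix l t assume l: "l \<in> L" and t: "t \<in> {l..dd l}"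
    then obtain k where k: "k \<in> P0" "l = c k" unfolding L_def by blast
    have kk: "k \<in> {0..1}" "k \<notin> T" using P0T[OF k(1)] by auto
    have t': "c k \<le> t" "t \<le> d k" using t k ddc[OF k(1)] by auto
    show "\<beta> t \<noteq> A"
    proof (cases "t = c k")
      case True then show ?thesis using cne[OF kk] by simp
    next
      case False
      show ?thesis
      proof (cases "t = d k")
        case True then show ?thesis using dne[OF kk] by simp
      next
        case False2: False
        have "t \<notin> T" using gapT[OF kk] t' False False2 by simp
        moreover have "t \<in> {0..1}" using t' cprops[OF kk] dprops[OF kk] Tsub by auto
        ultimately show ?thesis using TA by blast
      qed
    qed
  qed
  have iii: "\<forall>l1\<in>L. \<forall>l2\<in>L. l1 < l2 \<longrightarrow> dd l1 \<le> l2"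
  proof (intro ballI impI)
    fix l1 l2 assume "l1 \<in> L" "l2 \<in> L" "l1 < l2"
    then obtain k1 k2 where k: "k1 \<in> P0" "l1 = c k1" "k2 \<in> P0" "l2 = c k2" unfolding L_def by blast
    have kk1: "k1 \<in> {0..1}" "k1 \<notin> T" using P0T[OF k(1)] by auto
    have kk2: "k2 \<in> {0..1}" "k2 \<notin> T" using P0T[OF k(3)] by auto
    show "dd l1 \<le> l2" using comp1[OF kk1 kk2] k ddc[OF k(1)] \<open>l1 < l2\<close> by simp
  qed
  have iv: "\<forall>l\<in>L. \<beta> l \<in> E \<and> \<beta> (dd l) \<in> E"
  proof
    fix l assume "l \<in> L"
    then obtain k where k: "k \<in> P0" "l = c k" unfolding L_def by blast
    have kk: "k \<in> {0..1}" "k \<notin> T" using P0T[OF k(1)] by auto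
    show "\<beta> l \<in> E \<and> \<beta> (dd l) \<in> E" using cprops[OF kk] dprops[OF kk] k ddc[OF k(1)] unfolding T_def by simp
  qed
  have L0: "\<forall>l\<in>L. 0 \<le> l" using i by auto
  have L0': "0 \<in> L \<longrightarrow> a = the_elem (\<beta> 0)" using i by auto
  obtain \<alpha> where \<alpha>: "continuous_map (top_of_set {0..1}) X \<alpha>" "\<alpha> 0 = a" "\<alpha> 1 = a"
    "\<forall>t\<in>{0<..1}. (t \<in> (\<Union>l\<in>L. {l..dd l}) \<longrightarrow> p (\<alpha> t) = \<beta> t) \<and>
                   (t \<notin> (\<Union>l\<in>L. {l..dd l}) \<longrightarrow> \<alpha> t \<in> X closure_of A)"
    using alpha_aux[OF \<beta>c Lf i ii iii iv _ _ L0 a_cl L0'] by auto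
  define C where "C = (\<Union>l\<in>L. {l..dd l})"
  have \<alpha>l: "\<alpha> \<in> loops X a" unfolding loops_def pathin_def using \<alpha> by simp
  have C0: "0 \<notin> C" and C1: "1 \<notin> C" unfolding C_def using i by force+
  have \<alpha>v: "(t \<in> C \<longrightarrow> p (\<alpha> t) = \<beta> t) \<and> (t \<notin> C \<longrightarrow> \<alpha> t \<in> X closure_of A)" if t: "t \<in> {0..1}" for t
  proof (cases "t = 0")
    case True then show ?thesis using C0 \<alpha>(2) a_cl by simp
  next
    case False then have "t \<in> {0<..1}" using t by simp
    then show ?thesis using \<alpha>(4) unfolding C_def by blast
  qed
  have K0C: "K0 \<subseteq> C"
  proof
    fix t assume "t \<in> K0"
    then obtain k where k: "k \<in> P0" "t \<in> {c k<..<d k}" using P0(3) by blast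
    then have "c k \<in> L" "t \<in> {c k..dd (c k)}" unfolding L_def using ddc[OF k(1)] by auto
    then show "t \<in> C" unfolding C_def by blast
  qed
  define \<beta>' where "\<beta>' t = (if t \<in> C then \<beta> t else A)" for t
  have Cclosed: "closed C" unfolding C_def using Lf by (intro closed_UN) auto
  define Ci where "Ci = (\<Union>l\<in>L. {l<..<dd l})"
  have Ciopen: "open Ci" unfolding Ci_def by (intro open_UN) auto
  have \<beta>'c: "continuous_map (top_of_set {0..1}) Y \<beta>'"
    unfolding continuous_map_def
  proof (intro conjI allI impI)
    show "\<beta>' \<in> topspace (top_of_set {0..1}) \<rightarrow> topspace Y"
      using beta_top[OF \<beta>c] A_topY unfolding \<beta>'_def by auto
  next
    fix U assume U: "openin Y U"
    have Pre: "openin (top_of_set {0..1::real}) {t \<in> {0..1}. \<beta> t \<in> U}"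
      using openin_continuous_map_preimage[OF \<beta>c U] by simp
    show "openin (top_of_set {0..1}) {t \<in> topspace (top_of_set {0..1}). \<beta>' t \<in> U}"
    proof (cases "A \<in> U")
      case True
      have eq: "{t \<in> topspace (top_of_set {0..1}). \<beta>' t \<in> U} = ({0..1} \<inter> - C) \<union> {t \<in> {0..1}. \<beta> t \<in> U}"
        unfolding \<beta>'_def using True by auto
      have "openin (top_of_set {0..1::real}) ({0..1} \<inter> - C)"
        using Cclosed by (intro openin_open_Int) (simp add: open_Compl)
      then show ?thesis unfolding eq using Pre by (rule openin_Un)
    next
      case False
      have eq: "{t \<in> topspace (top_of_set {0..1}). \<beta>' t \<in> U} = {t \<in> {0..1}. \<beta> t \<in> U} \<inter> ({0..1} \<inter> Ci)"
      proof (rule set_eqI)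
        fix t
        show "t \<in> {t \<in> topspace (top_of_set {0..1}). \<beta>' t \<in> U} \<longleftrightarrow> t \<in> {t \<in> {0..1}. \<beta> t \<in> U} \<inter> ({0..1} \<inter> Ci)"
        proof
          assume a1: "t \<in> {t \<in> topspace (top_of_set {0..1}). \<beta>' t \<in> U}"
          have tC: "t \<in> C" using a1 False unfolding \<beta>'_def by (cases "t \<in> C") auto
          then have bt: "\<beta> t \<in> U" "t \<in> {0..1}" using a1 unfolding \<beta>'_def by auto
          obtain l where l: "l \<in> L" "t \<in> {l..dd l}" using tC unfolding C_def by blast
          have "t \<noteq> l" using E_star[OF U bt(1)] False iv l(1) by metis
          moreover have "t \<noteq> dd l" using E_star[OF U bt(1)] False iv l(1) by metis
          ultimately have "t \<in> {l<..<dd l}" using l(2) by auto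
          then have "t \<in> Ci" unfolding Ci_def using l(1) by blast
          then show "t \<in> {t \<in> {0..1}. \<beta> t \<in> U} \<inter> ({0..1} \<inter> Ci)" using bt by simp
        next
          assume a2: "t \<in> {t \<in> {0..1}. \<beta> t \<in> U} \<inter> ({0..1} \<inter> Ci)"
          then obtain l where l: "l \<in> L" "t \<in> {l<..<dd l}" unfolding Ci_def by blast
          then have "t \<in> {l..dd l}" by simp
          then have "t \<in> C" unfolding C_def using l(1) by blast
          then show "t \<in> {t \<in> topspace (top_of_set {0..1}). \<beta>' t \<in> U}" using a2 unfolding \<beta>'_def by simp
        qed
      qed
      have "openin (top_of_set {0..1::real}) ({0..1} \<inter> Ci)" using Ciopen by (rule openin_open_Int)
      then show ?thesis unfolding eq using Pre by (rule openin_Int[rotated])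
    qed
  qed
  have \<beta>'l: "\<beta>' \<in> loops Y A" unfolding loops_def pathin_def using \<beta>'c C0 C1 unfolding \<beta>'_def by simp
  have cons: "\<forall>z\<in>P. \<beta>' ` fst z \<subseteq> snd z"
  proof (intro ballI subsetI)
    fix z y assume z: "z \<in> P" and y: "y \<in> \<beta>' ` fst z"
    then obtain t where t: "t \<in> fst z" "y = \<beta>' t" by blast
    show "y \<in> snd z"
    proof (cases "t \<in> C")
      case True
      then show ?thesis using t P z unfolding \<beta>'_def by auto
    next
      case False
      have "A \<in> snd z"
      proof (rule ccontr)
        assume "A \<notin> snd z"
        then have "z \<in> Pb" unfolding Pb_def using z by simp
        then have "t \<in> K0" unfolding K0_def using t(1) by blast
        then show False using K0C False by blast
      qed
      then show ?thesis using t False unfolding \<beta>'_def by simp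
    qed
  qed
  have pac: "continuous_map (top_of_set {0..1}) Y (p \<circ> \<alpha>)"
    by (rule continuous_map_compose[OF \<alpha>(1) contp])
  have hom: "loop_homotopic Y A (p \<circ> \<alpha>) \<beta>'"
  proof (rule spec_homotopy[OF pac \<beta>'c])
    show "\<forall>t\<in>{0..1}. \<forall>U. openin Y U \<longrightarrow> (p \<circ> \<alpha>) t \<in> U \<longrightarrow> \<beta>' t \<in> U"
    proof (intro ballI allI impI)
      fix t U assume t: "t \<in> {0..1}" and U: "openin Y U" and pt: "(p \<circ> \<alpha>) t \<in> U"
      show "\<beta>' t \<in> U"
      proof (cases "t \<in> C")
        case True then show ?thesis using \<alpha>v[OF t] pt unfolding \<beta>'_def by simp
      next
        case False
        then have "\<alpha> t \<in> X closure_of A" using \<alpha>v[OF t] by simp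
        then have "p (\<alpha> t) \<in> E" by blast
        then have "A \<in> U" using E_star[OF U] pt by simp
        then show ?thesis using False unfolding \<beta>'_def by simp
      qed
    qed
    show "(p \<circ> \<alpha>) 0 = A" "(p \<circ> \<alpha>) 1 = A" using \<alpha>(2,3) pa by simp_all
    show "\<beta>' 0 = A" "\<beta>' 1 = A" using C0 C1 unfolding \<beta>'_def by simp_all
  qed
  show ?thesis using \<alpha>l \<beta>'l cons hom by blast
qed

end

theorem theorem3p2:
  fixes X :: "'a topology" and A :: "'a set" and a :: 'a
  assumes "openin X A"
    and "path_connectedin X (X closure_of A)"
    and "a \<in> A"
  shows "(pi1_top (quotient_space X A) (collapse A a)) closure_of
           (induced_pi1 X a (quotient_space X A) (collapse A) ` topspace (pi1_top X a))
         = topspace (pi1_top (quotient_space X A) (collapse A a))"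
proof -
  interpret Q: qs X A a by (rule qs.intro) (rule assms)+
  have star: "collapse A a = A" using assms(3) by (simp add: collapse_def)
  let ?Y = "quotient_space X A"
  let ?S = "induced_pi1 X a (quotient_space X A) (collapse A) ` topspace (pi1_top X a)"
  have "topspace (pi1_top ?Y A) \<subseteq> pi1_top ?Y A closure_of ?S"
  proof
    fix y assume y: "y \<in> topspace (pi1_top ?Y A)"
    then obtain \<beta> where \<beta>: "\<beta> \<in> loops ?Y A" "y = loop_class ?Y A \<beta>"
      unfolding topspace_pi1_top by blast
    have "\<exists>z. z \<in> ?S \<and> z \<in> W" if yW: "y \<in> W" and Wo: "openin (pi1_top ?Y A) W" for W
    proof -
      define V where "V = {g \<in> loops ?Y A. loop_class ?Y A g \<in> W}"
      have Vo: "openin (loop_space ?Y A) V" unfolding V_def by (rule openin_pi1_top_preimage[OF Wo])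
      have \<beta>V: "\<beta> \<in> V" unfolding V_def using \<beta> yW by simp
      obtain P where P: "finite P"
        "\<forall>z\<in>P. compactin (top_of_set {0..1::real}) (fst z) \<and> openin ?Y (snd z) \<and> \<beta> ` (fst z) \<subseteq> snd z"
        "\<forall>g\<in>loops ?Y A. (\<forall>z\<in>P. g ` (fst z) \<subseteq> snd z) \<longrightarrow> g \<in> V"
        using loop_space_nbhd[OF Vo \<beta>V] by blast
      obtain \<alpha> \<beta>' where ab: "\<alpha> \<in> loops X a" "\<beta>' \<in> loops ?Y A" "\<forall>z\<in>P. \<beta>' ` fst z \<subseteq> snd z"
        "loop_homotopic ?Y A (collapse A \<circ> \<alpha>) \<beta>'"
        using Q.core[OF \<beta>(1) P(1) P(2)] by blast
      have "\<beta>' \<in> V" using P(3) ab(2,3) by blast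
      then have b'W: "loop_class ?Y A \<beta>' \<in> W" unfolding V_def by simp
      define g where "g = (SOME g. g \<in> loop_class X a \<alpha>)"
      have "g \<in> loop_class X a \<alpha>" unfolding g_def by (rule someI[where P="\<lambda>g. g \<in> loop_class X a \<alpha>", OF loop_class_self[OF ab(1)]])
      then have g: "g \<in> loops X a" "loop_homotopic X a \<alpha> g" unfolding loop_class_def by simp_all
      have h1: "loop_homotopic ?Y (collapse A a) (collapse A \<circ> \<alpha>) (collapse A \<circ> g)"
        by (rule loop_homotopic_compose[OF g(2) Q.contp])
      have "induced_pi1 X a ?Y (collapse A) (loop_class X a \<alpha>) = loop_class ?Y A (collapse A \<circ> g)"
        unfolding induced_pi1_def g_def star ..
      also have "\<dots> = loop_class ?Y A (collapse A \<circ> \<alpha>)"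
        using loop_class_eq[OF h1] star by simp
      also have "\<dots> = loop_class ?Y A \<beta>'"
        by (rule loop_class_eq[OF ab(4)])
      finally have eq: "induced_pi1 X a ?Y (collapse A) (loop_class X a \<alpha>) = loop_class ?Y A \<beta>'" .
      have "loop_class X a \<alpha> \<in> topspace (pi1_top X a)" unfolding topspace_pi1_top using ab(1) by blast
      then have "induced_pi1 X a ?Y (collapse A) (loop_class X a \<alpha>) \<in> ?S" by blast
      then show ?thesis using eq b'W by metis
    qed
    then show "y \<in> pi1_top ?Y A closure_of ?S" unfolding in_closure_of using y by blast
  qed
  then show ?thesis unfolding star
    using closure_of_subset_topspace by (rule subset_antisym[rotated])
qed

end
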